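(* Let $Z$ and $W$ be random variables with $P(Z>u)>0$ and $P(W>u)>0$ for all $u>0$, and let $Y$ be a random variable independent of $Z$ and of $W$ satisfying condition $(\mathrm{P})$. If $\lim_{u\to\infty}P(Z>u)/P(W>u)=1$, then $\lim_{u\to\infty}P(Y+Z>u)/P(Y+W>u)=1$; if $\lim_{u\to\infty}P(Z>u)/P(W>u)=0$, then $\lim_{u\to\infty}P(Y+Z>u)/P(Y+W>u)=0$.
   Context: A random variable $Y$ satisfies condition $(\mathrm{P})$ if $P(Y>u)>0$ for all $u>0$ and there is a constant $a>0$ with $\lim_{u\to\infty}P(Y>u+a)/P(Y>u)=0$. *)

theory Defs
  imports "HOL-Probability.Probability"
begin

definition condition_P :: "'a measure \<Rightarrow> ('a \<Rightarrow> real) \<Rightarrow> bool" where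
  "condition_P M Y \<longleftrightarrow>
     (\<forall>u>0. measure M {x \<in> space M. Y x > u} > 0) \<and>
     (\<exists>a>0. ((\<lambda>u. measure M {x \<in> space M. Y x > u + a} / measure M {x \<in> space M. Y x > u})
              \<longlongrightarrow> 0) at_top)"

end

theory Submission
  imports Defs
begin

context prob_space begin
lemma conv_repr:
  fixes Y V :: "'a \<Rightarrow> real"
  assumes Y: "Y \<in> borel_measurable M" and V: "V \<in> borel_measurable M"
    and ind: "indep_var borel Y borel V"
  shows "emeasure M {x\<in>space M. Y x + V x > u}
       = (\<integral>\<^sup>+y. emeasure M {x\<in>space M. V x > u - y} \<partial>(distr M borel Y))"
proof -
  define S where "S = {p::real\<times>real. fst p + snd p > u}"
  have S: "S \<in> sets (borel \<Otimes>\<^sub>M borel)"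
  proof -
    have "{p\<in>space (borel \<Otimes>\<^sub>M borel). u < fst p + (snd p::real)} \<in> sets (borel \<Otimes>\<^sub>M borel)"
      by measurable
    then show ?thesis unfolding S_def by (simp add: space_pair_measure)
  qed
  have meas: "(\<lambda>x. (Y x, V x)) \<in> measurable M (borel \<Otimes>\<^sub>M borel)" using Y V by measurable
  have "emeasure M {x\<in>space M. Y x + V x > u} = emeasure (distr M (borel \<Otimes>\<^sub>M borel) (\<lambda>x. (Y x, V x))) S"
    by (subst emeasure_distr[OF meas S]) (auto simp: S_def intro!: arg_cong[where f="emeasure M"])
  also have "distr M (borel \<Otimes>\<^sub>M borel) (\<lambda>x. (Y x, V x)) = distr M borel Y \<Otimes>\<^sub>M distr M borel V"
    using ind unfolding indep_var_distribution_eq by simp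
  also have "emeasure (distr M borel Y \<Otimes>\<^sub>M distr M borel V) S
     = (\<integral>\<^sup>+y. emeasure (distr M borel V) (Pair y -` S) \<partial>(distr M borel Y))"
  proof -
    interpret pV: prob_space "distr M borel V" using V by (rule prob_space_distr)
    show ?thesis by (rule pV.emeasure_pair_measure_alt) (use S in simp)
  qed
  also have "\<dots> = (\<integral>\<^sup>+y. emeasure M {x\<in>space M. V x > u - y} \<partial>(distr M borel Y))"
  proof (rule nn_integral_cong)
    fix y
    have "Pair y -` S = {u - y<..}" by (auto simp: S_def)
    then show "emeasure (distr M borel V) (Pair y -` S) = emeasure M {x\<in>space M. V x > u - y}"
      using V by (simp add: emeasure_distr) (auto intro!: arg_cong[where f="emeasure M"])
  qed
  finally show ?thesis .
qed

lemma tail_meas: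
  fixes V :: "'a \<Rightarrow> real"
  assumes V: "V \<in> borel_measurable M"
  shows "(\<lambda>y. emeasure M {x\<in>space M. V x > u - y}) \<in> borel_measurable (distr M borel (Y::'a\<Rightarrow>real))"
proof -
  have "mono (\<lambda>y. prob {x\<in>space M. V x > u - y})"
    by (rule monoI, rule finite_measure_mono) (use V in auto)
  then have "(\<lambda>y. prob {x\<in>space M. V x > u - y}) \<in> borel_measurable borel" by (rule borel_measurable_mono)
  then have "(\<lambda>y. ennreal (prob {x\<in>space M. V x > u - y})) \<in> borel_measurable borel" by measurable
  then show ?thesis by (simp add: emeasure_eq_measure)
qed

lemma conv_upper:
  fixes Y Z W :: "'a \<Rightarrow> real"
  assumes Y: "Y \<in> borel_measurable M" and Z: "Z \<in> borel_measurable M" and W: "W \<in> borel_measurable M"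
    and indZ: "indep_var borel Y borel Z" and indW: "indep_var borel Y borel W"
    and K: "K \<ge> 0"
    and hc: "\<forall>t\<ge>c. prob {x\<in>space M. Z x > t} \<le> K * prob {x\<in>space M. W x > t}"
  shows "prob {x\<in>space M. Y x + Z x > u} \<le> K * prob {x\<in>space M. Y x + W x > u} + prob {x\<in>space M. Y x > u - c}"
proof -
  have "ennreal (prob {x\<in>space M. Y x + Z x > u}) = (\<integral>\<^sup>+y. emeasure M {x\<in>space M. Z x > u - y} \<partial>(distr M borel Y))"
    using conv_repr[OF Y Z indZ] by (simp add: emeasure_eq_measure)
  also have "\<dots> \<le> (\<integral>\<^sup>+y. ennreal K * emeasure M {x\<in>space M. W x > u - y} + indicator {u - c<..} y \<partial>(distr M borel Y))"
  proof (rule nn_integral_mono)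
    fix y
    show "emeasure M {x\<in>space M. Z x > u - y} \<le> ennreal K * emeasure M {x\<in>space M. W x > u - y} + indicator {u - c<..} y"
    proof (cases "u - y \<ge> c")
      case True
      then have "prob {x\<in>space M. Z x > u - y} \<le> K * prob {x\<in>space M. W x > u - y}" using hc by auto
      then have "ennreal (prob {x\<in>space M. Z x > u - y}) \<le> ennreal K * ennreal (prob {x\<in>space M. W x > u - y})"
        using K by (simp add: ennreal_mult[symmetric] ennreal_leI)
      then show ?thesis by (simp add: emeasure_eq_measure add_increasing2)
    next
      case False
      then have "indicator {u - c<..} y = (1::ennreal)" by auto
      then show ?thesis using emeasure_le_1 by (simp add: add_increasing)
    qed
  qed
  also have "\<dots> = ennreal K * (\<integral>\<^sup>+y. emeasure M {x\<in>space M. W x > u - y} \<partial>(distr M borel Y))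
       + emeasure (distr M borel Y) {u - c<..}"
    using tail_meas[OF W, of u Y]
    by (subst nn_integral_add) (auto simp: nn_integral_cmult)
  also have "\<dots> = ennreal K * ennreal (prob {x\<in>space M. Y x + W x > u}) + ennreal (prob {x\<in>space M. Y x > u - c})"
    using conv_repr[OF Y W indW] Y by (simp add: emeasure_distr emeasure_eq_measure vimage_def Int_def conj_commute)
  also have "\<dots> = ennreal (K * prob {x\<in>space M. Y x + W x > u} + prob {x\<in>space M. Y x > u - c})"
    using K by (simp add: ennreal_mult ennreal_plus)
  finally have "ennreal (prob {x\<in>space M. Y x + Z x > u})
     \<le> ennreal (K * prob {x\<in>space M. Y x + W x > u} + prob {x\<in>space M. Y x > u - c})" .
  moreover have "0 \<le> K * prob {x\<in>space M. Y x + W x > u} + prob {x\<in>space M. Y x > u - c}"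
    using K by simp
  ultimately show ?thesis using ennreal_le_iff by blast
qed

lemma conv_lower:
  fixes Y V :: "'a \<Rightarrow> real"
  assumes Y: "Y \<in> borel_measurable M" and V: "V \<in> borel_measurable M"
    and ind: "indep_var borel Y borel V"
  shows "prob {x\<in>space M. V x > d} * prob {x\<in>space M. Y x > u - d} \<le> prob {x\<in>space M. Y x + V x > u}"
proof -
  have "ennreal (prob {x\<in>space M. V x > d} * prob {x\<in>space M. Y x > u - d})
      = ennreal (prob {x\<in>space M. V x > d}) * emeasure (distr M borel Y) {u - d<..}"
    using Y by (simp add: ennreal_mult emeasure_distr emeasure_eq_measure vimage_def Int_def conj_commute)
  also have "\<dots> = (\<integral>\<^sup>+y. ennreal (prob {x\<in>space M. V x > d}) * indicator {u - d<..} y \<partial>(distr M borel Y))"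
    by (simp add: nn_integral_cmult_indicator)
  also have "\<dots> \<le> (\<integral>\<^sup>+y. emeasure M {x\<in>space M. V x > u - y} \<partial>(distr M borel Y))"
  proof (rule nn_integral_mono)
    fix y
    show "ennreal (prob {x\<in>space M. V x > d}) * indicator {u - d<..} y \<le> emeasure M {x\<in>space M. V x > u - y}"
    proof (cases "y > u - d")
      case True
      have "prob {x\<in>space M. V x > d} \<le> prob {x\<in>space M. V x > u - y}"
        by (rule finite_measure_mono) (use True V in auto)
      then show ?thesis using True by (simp add: emeasure_eq_measure)
    qed simp
  qed
  also have "\<dots> = ennreal (prob {x\<in>space M. Y x + V x > u})"
    using conv_repr[OF Y V ind] by (simp add: emeasure_eq_measure)
  finally show ?thesis by (simp add: ennreal_le_iff)
qed

lemma small_tail: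
  fixes Y V :: "'a \<Rightarrow> real"
  assumes Y: "Y \<in> borel_measurable M" and V: "V \<in> borel_measurable M"
    and ind: "indep_var borel Y borel V" and cP: "condition_P M Y"
    and Vpos: "\<forall>t>0. prob {x\<in>space M. V x > t} > 0" and del: "\<delta> > 0"
  shows "eventually (\<lambda>u. prob {x\<in>space M. Y x > u - c} \<le> \<delta> * prob {x\<in>space M. Y x + V x > u}
            \<and> prob {x\<in>space M. Y x + V x > u} > 0) at_top"
proof -
  obtain a where a: "a > 0" and lim: "((\<lambda>u. prob {x\<in>space M. Y x > u + a} / prob {x\<in>space M. Y x > u}) \<longlongrightarrow> 0) at_top"
    using cP unfolding condition_P_def by blast
  have Ypos: "\<And>v. v > 0 \<Longrightarrow> prob {x\<in>space M. Y x > v} > 0" using cP unfolding condition_P_def by blast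
  define d where "d = \<bar>c\<bar> + a"
  have d: "d > 0" using a by (simp add: d_def)
  define pV where "pV = prob {x\<in>space M. V x > d}"
  have pV: "pV > 0" using Vpos d by (simp add: pV_def)
  have "eventually (\<lambda>v. prob {x\<in>space M. Y x > v + a} / prob {x\<in>space M. Y x > v} < \<delta> * pV) at_top"
    by (rule order_tendstoD(2)[OF lim]) (use del pV in simp)
  moreover have "eventually (\<lambda>v. v > (0::real)) at_top" by (rule eventually_gt_at_top)
  ultimately have "eventually (\<lambda>v. prob {x\<in>space M. Y x > v + a} / prob {x\<in>space M. Y x > v} < \<delta> * pV \<and> v > 0) at_top"
    by (rule eventually_conj)
  then obtain N where N: "\<And>v. v \<ge> N \<Longrightarrow> prob {x\<in>space M. Y x > v + a} / prob {x\<in>space M. Y x > v} < \<delta> * pV \<and> v > 0"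
    unfolding eventually_at_top_linorder by blast
  show ?thesis unfolding eventually_at_top_linorder
  proof (intro exI allI impI)
    fix u assume u: "u \<ge> N + d"
    define v where "v = u - d"
    have v: "v \<ge> N" using u by (simp add: v_def)
    have vpos: "v > 0" and r: "prob {x\<in>space M. Y x > v + a} / prob {x\<in>space M. Y x > v} < \<delta> * pV" using N[OF v] by auto
    have PY: "prob {x\<in>space M. Y x > v} > 0" using Ypos[OF vpos] .
    have r2: "prob {x\<in>space M. Y x > v + a} < \<delta> * pV * prob {x\<in>space M. Y x > v}"
      using r PY by (simp add: divide_less_eq)
    have "prob {x\<in>space M. Y x > u - c} \<le> prob {x\<in>space M. Y x > v + a}"
      by (rule finite_measure_mono) (use Y in \<open>auto simp: v_def d_def\<close>)
    have low: "pV * prob {x\<in>space M. Y x > v} \<le> prob {x\<in>space M. Y x + V x > u}"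
      using conv_lower[OF Y V ind, of d u] by (simp add: pV_def v_def)
    have "prob {x\<in>space M. Y x > u - c} \<le> prob {x\<in>space M. Y x > v + a}"
      by (rule finite_measure_mono) (use Y in \<open>auto simp: v_def d_def\<close>)
    also have "\<dots> \<le> \<delta> * (pV * prob {x\<in>space M. Y x > v})" using r2 by simp
    also have "\<dots> \<le> \<delta> * prob {x\<in>space M. Y x + V x > u}" using low del by simp
    finally show "prob {x\<in>space M. Y x > u - c} \<le> \<delta> * prob {x\<in>space M. Y x + V x > u}
            \<and> prob {x\<in>space M. Y x + V x > u} > 0"
      using low pV PY by (simp add: mult_pos_pos order_less_le_trans[OF mult_pos_pos[OF pV PY] low])
  qed
qed

lemma ratio_bound:
  fixes Y Z W :: "'a \<Rightarrow> real"
  assumes Y: "Y \<in> borel_measurable M" and Z: "Z \<in> borel_measurable M" and W: "W \<in> borel_measurable M"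
    and indZ: "indep_var borel Y borel Z" and indW: "indep_var borel Y borel W" and cP: "condition_P M Y"
    and Wpos: "\<forall>t>0. prob {x\<in>space M. W x > t} > 0"
    and K: "K \<ge> 0" and hc: "\<forall>t\<ge>c. prob {x\<in>space M. Z x > t} \<le> K * prob {x\<in>space M. W x > t}"
    and del: "\<delta> > 0"
  shows "eventually (\<lambda>u. prob {x\<in>space M. Y x + Z x > u} \<le> (K + \<delta>) * prob {x\<in>space M. Y x + W x > u}
            \<and> prob {x\<in>space M. Y x + W x > u} > 0) at_top"
  using small_tail[OF Y W indW cP Wpos del, of c]
proof (rule eventually_mono)
  fix u assume h: "prob {x\<in>space M. Y x > u - c} \<le> \<delta> * prob {x\<in>space M. Y x + W x > u}
            \<and> prob {x\<in>space M. Y x + W x > u} > 0"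
  have "prob {x\<in>space M. Y x + Z x > u} \<le> K * prob {x\<in>space M. Y x + W x > u} + prob {x\<in>space M. Y x > u - c}"
    by (rule conv_upper[OF Y Z W indZ indW K hc])
  with h show "prob {x\<in>space M. Y x + Z x > u} \<le> (K + \<delta>) * prob {x\<in>space M. Y x + W x > u}
            \<and> prob {x\<in>space M. Y x + W x > u} > 0" by (simp add: distrib_right)
qed
end

lemma ev_bound:
  fixes f g :: "real \<Rightarrow> real"
  assumes lim: "((\<lambda>t. f t / g t) \<longlongrightarrow> L) at_top" and g: "\<forall>t>0. g t > 0" and LK: "L < K"
  shows "\<exists>c. \<forall>t\<ge>c. f t \<le> K * g t"
proof -
  have "eventually (\<lambda>t. f t / g t < K) at_top" by (rule order_tendstoD(2)[OF lim LK])
  moreover have "eventually (\<lambda>t. t > (0::real)) at_top" by (rule eventually_gt_at_top)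
  ultimately have "eventually (\<lambda>t. f t / g t < K \<and> t > 0) at_top" by (rule eventually_conj)
  then obtain c where c: "\<And>t. t \<ge> c \<Longrightarrow> f t / g t < K \<and> t > 0"
    unfolding eventually_at_top_linorder by blast
  show ?thesis
  proof (intro exI allI impI)
    fix t assume "t \<ge> c"
    then have "f t / g t < K" "g t > 0" using c g by auto
    then show "f t \<le> K * g t" by (simp add: divide_less_eq)
  qed
qed

theorem lemma1:
  fixes M :: "'a measure" and Y Z W :: "'a \<Rightarrow> real"
  assumes "prob_space M"
    and "Y \<in> borel_measurable M" and "Z \<in> borel_measurable M" and "W \<in> borel_measurable M"
    and "\<forall>u>0. measure M {x \<in> space M. Z x > u} > 0"
    and "\<forall>u>0. measure M {x \<in> space M. W x > u} > 0"
    and "prob_space.indep_var M borel Y borel Z"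
    and "prob_space.indep_var M borel Y borel W"
    and "condition_P M Y"
  shows "(((\<lambda>u. measure M {x \<in> space M. Z x > u} / measure M {x \<in> space M. W x > u}) \<longlongrightarrow> 1) at_top
            \<longrightarrow> ((\<lambda>u. measure M {x \<in> space M. Y x + Z x > u} / measure M {x \<in> space M. Y x + W x > u}) \<longlongrightarrow> 1) at_top)
       \<and> (((\<lambda>u. measure M {x \<in> space M. Z x > u} / measure M {x \<in> space M. W x > u}) \<longlongrightarrow> 0) at_top
            \<longrightarrow> ((\<lambda>u. measure M {x \<in> space M. Y x + Z x > u} / measure M {x \<in> space M. Y x + W x > u}) \<longlongrightarrow> 0) at_top)"
proof -
  note RB = prob_space.ratio_bound[OF assms(1)]
  define pZ where "pZ = (\<lambda>u. measure M {x \<in> space M. Y x + Z x > u})"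
  define pW where "pW = (\<lambda>u. measure M {x \<in> space M. Y x + W x > u})"
  define fZ where "fZ = (\<lambda>u. measure M {x \<in> space M. Z x > u})"
  define fW where "fW = (\<lambda>u. measure M {x \<in> space M. W x > u})"
  have pZnn: "\<And>u. pZ u \<ge> 0" by (simp add: pZ_def)
  have case1: "((\<lambda>u. pZ u / pW u) \<longlongrightarrow> 1) at_top" if lim: "((\<lambda>u. fZ u / fW u) \<longlongrightarrow> 1) at_top"
    unfolding tendsto_iff
  proof (intro allI impI)
    fix e :: real assume e: "e > 0"
    have lim2: "((\<lambda>u. fW u / fZ u) \<longlongrightarrow> 1) at_top"
      using tendsto_inverse[OF lim] by simp
    obtain c1 where c1: "\<forall>t\<ge>c1. fZ t \<le> (1 + e/4) * fW t"
      using ev_bound[OF lim, of "1 + e/4"] assms(6) e by (auto simp: fW_def)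
    obtain c2 where c2: "\<forall>t\<ge>c2. fW t \<le> (1 + e/4) * fZ t"
      using ev_bound[OF lim2, of "1 + e/4"] assms(5) e by (auto simp: fZ_def)
    have ev1: "eventually (\<lambda>u. pZ u \<le> (1 + e/4 + e/4) * pW u \<and> pW u > 0) at_top"
      using RB[OF assms(2,3,4,7,8,9,6), of "1 + e/4" c1 "e/4"] c1 e
      by (simp add: pZ_def pW_def fZ_def fW_def)
    have ev2: "eventually (\<lambda>u. pW u \<le> (1 + e/4 + e/4) * pZ u \<and> pZ u > 0) at_top"
      using RB[OF assms(2,4,3,8,7,9,5), of "1 + e/4" c2 "e/4"] c2 e
      by (simp add: pZ_def pW_def fZ_def fW_def)
    show "eventually (\<lambda>u. dist (pZ u / pW u) 1 < e) at_top"
      using eventually_conj[OF ev1 ev2]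
    proof (rule eventually_mono)
      fix u assume h: "(pZ u \<le> (1 + e/4 + e/4) * pW u \<and> pW u > 0) \<and> (pW u \<le> (1 + e/4 + e/4) * pZ u \<and> pZ u > 0)"
      then have a: "pZ u \<le> (1 + e/2) * pW u" and b: "pW u \<le> (1 + e/2) * pZ u" and pw: "pW u > 0" and pz: "pZ u > 0"
        by (auto simp: add.commute)
      have "(1 + e/2) * pW u < (1 + e) * pW u" using pw e by (intro mult_strict_right_mono) auto
      then have up: "pZ u < (1 + e) * pW u" using a by linarith
      have lo: "(1 - e) * pW u < pZ u"
      proof (cases "e \<ge> 1")
        case True
        then have "(1 - e) * pW u \<le> 0" using pw by (simp add: mult_nonpos_nonneg)
        then show ?thesis using pz by simp
      next
        case False
        then have "(1 - e) * pW u \<le> (1 - e) * ((1 + e/2) * pZ u)" using b by (simp add: mult_left_mono)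
        also have "\<dots> = (1 - e/2 - e*e/2) * pZ u" by (simp add: field_simps)
        also have "\<dots> < pZ u" using pz e by (simp add: mult_less_cancel_right1 field_simps add_pos_pos mult_pos_pos)
        finally show ?thesis .
      qed
      have "pZ u / pW u < 1 + e" using up pw by (simp add: divide_less_eq)
      moreover have "1 - e < pZ u / pW u" using lo pw by (simp add: less_divide_eq)
      ultimately show "dist (pZ u / pW u) 1 < e" by (simp add: dist_real_def abs_less_iff)
    qed
  qed
  have case0: "((\<lambda>u. pZ u / pW u) \<longlongrightarrow> 0) at_top" if lim: "((\<lambda>u. fZ u / fW u) \<longlongrightarrow> 0) at_top"
    unfolding tendsto_iff
  proof (intro allI impI)
    fix e :: real assume e: "e > 0"
    obtain c1 where c1: "\<forall>t\<ge>c1. fZ t \<le> (e/4) * fW t"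
      using ev_bound[OF lim, of "e/4"] assms(6) e by (auto simp: fW_def)
    have ev1: "eventually (\<lambda>u. pZ u \<le> (e/4 + e/4) * pW u \<and> pW u > 0) at_top"
      using RB[OF assms(2,3,4,7,8,9,6), of "e/4" c1 "e/4"] c1 e
      by (simp add: pZ_def pW_def fZ_def fW_def)
    show "eventually (\<lambda>u. dist (pZ u / pW u) 0 < e) at_top"
      using ev1
    proof (rule eventually_mono)
      fix u assume h: "pZ u \<le> (e/4 + e/4) * pW u \<and> pW u > 0"
      moreover have "(e/4 + e/4) * pW u < e * pW u" using h e by (intro mult_strict_right_mono) auto
      ultimately have "pZ u < e * pW u" by linarith
      then have "pZ u / pW u < e" using h by (simp add: divide_less_eq)
      then show "dist (pZ u / pW u) 0 < e" using pZnn[of u] h by (simp add: dist_real_def)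
    qed
  qed
  show ?thesis using case0 case1 by (simp add: pZ_def pW_def fZ_def fW_def)
qed
end
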